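(* The set $\mathcal{AN}_{\operatorname{non}(\mathcal N)}$ is $2^{\operatorname{non}(\mathcal N)}$-algebrable in $\left(\mathbb R^{\mathbb R}\right)^{\operatorname{non}(\mathcal N)}$ (in ZFC).
   Context: For an infinite cardinal $\kappa$, a $\kappa$-sequence $(x_\alpha)_{\alpha<\kappa}$ converges to $x$ if for every neighbourhood $U$ of $x$ there is $\alpha_0<\kappa$ with $x_\alpha\in U$ for all $\alpha_0<\alpha<\kappa$; $\left(\mathbb R^{\mathbb R}\right)^{\kappa}$ is the commutative real algebra of $\kappa$-sequences of functions $\mathbb R\to\mathbb R$ with indexwise operations. $\operatorname{non}(\mathcal N)$ is the least cardinality of a subset of $[0,1]$ that is not Lebesgue null. $\mathcal{AN}_{\kappa}$: $\kappa$-sequences of Lebesgue measurable functions $f_\alpha:\mathbb R\to\mathbb R$ converging pointwise a.e. to a function that is not Lebesgue measurable. A subset $S$ of an algebra is $\mu$-algebrable if there is a subalgebra $B$ with $B\setminus\{0\}\subset S$, of vector-space dimension $\mu$, having a minimal system of generators $G$ with $\operatorname{card}(G)=\mu$ (minimal: $G$ generates $B$ and no $s\in G$ belongs to the algebra generated by $G\setminus\{s\}$). *)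

theory Defs
  imports "HOL-Analysis.Analysis"
begin

text \<open>The cardinal non(N) of the null ideal, as a property of a set S:
  S has cardinality non(N), the least cardinality of a non-null subset of [0,1].\<close>
definition has_card_nonN :: "'a set \<Rightarrow> bool" where
  "has_card_nonN S \<longleftrightarrow>
     (\<exists>A. A \<subseteq> {0..1::real} \<and> A \<notin> null_sets lebesgue \<and> (card_of A, card_of S) \<in> ordIso) \<and>
     (\<forall>A. A \<subseteq> {0..1::real} \<and> (card_of A, card_of S) \<in> ordLess \<longrightarrow> A \<in> null_sets lebesgue)"

text \<open>Convergence of a kappa-sequence indexed by the field of the well-order r
  (alpha < beta iff (alpha,beta) in r and alpha /= beta).\<close>
definition kconv :: "('i \<times> 'i) set \<Rightarrow> ('i \<Rightarrow> 'b::topological_space) \<Rightarrow> 'b \<Rightarrow> bool" where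
  "kconv r s l \<longleftrightarrow>
     (\<forall>U. open U \<and> l \<in> U \<longrightarrow>
        (\<exists>a0\<in>Field r. \<forall>a\<in>Field r. (a0, a) \<in> r \<and> a \<noteq> a0 \<longrightarrow> s a \<in> U))"

text \<open>The set AN_kappa in (R^R)^kappa, sequences indexed by the type 'i ordered by r.\<close>
definition AN :: "('i \<times> 'i) set \<Rightarrow> ('i \<Rightarrow> real \<Rightarrow> real) set" where
  "AN r = {F. (\<forall>i. F i \<in> borel_measurable lebesgue) \<and>
              (\<exists>f. f \<notin> borel_measurable lebesgue \<and>
                   (AE x in lebesgue. kconv r (\<lambda>i. F i x) (f x)))}"

definition subalg :: "('i \<Rightarrow> real \<Rightarrow> real) set \<Rightarrow> bool" where
  "subalg B \<longleftrightarrow> (\<lambda>i x. 0) \<in> B \<and>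
     (\<forall>F\<in>B. \<forall>G\<in>B. (\<lambda>i x. F i x + G i x) \<in> B \<and> (\<lambda>i x. F i x * G i x) \<in> B) \<and>
     (\<forall>F\<in>B. \<forall>c::real. (\<lambda>i x. c * F i x) \<in> B)"

definition alg_gen :: "('i \<Rightarrow> real \<Rightarrow> real) set \<Rightarrow> ('i \<Rightarrow> real \<Rightarrow> real) set" where
  "alg_gen G = \<Inter>{B. subalg B \<and> G \<subseteq> B}"

definition lin_span :: "('i \<Rightarrow> real \<Rightarrow> real) set \<Rightarrow> ('i \<Rightarrow> real \<Rightarrow> real) set" where
  "lin_span H = {F. \<exists>T c. finite T \<and> T \<subseteq> H \<and> F = (\<lambda>i x. \<Sum>t\<in>T. c t * t i x)}"

definition lin_indep :: "('i \<Rightarrow> real \<Rightarrow> real) set \<Rightarrow> bool" where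
  "lin_indep H \<longleftrightarrow> (\<forall>T c. finite T \<and> T \<subseteq> H \<and> (\<lambda>i x. \<Sum>t\<in>T. c t * t i x) = (\<lambda>i x. 0)
                        \<longrightarrow> (\<forall>t\<in>T. c t = (0::real)))"

definition vdim_eq :: "('i \<Rightarrow> real \<Rightarrow> real) set \<Rightarrow> 'm set \<Rightarrow> bool" where
  "vdim_eq B M \<longleftrightarrow> (\<exists>H. H \<subseteq> B \<and> lin_indep H \<and> lin_span H = B \<and> (card_of H, card_of M) \<in> ordIso)"

definition minimal_generators :: "('i \<Rightarrow> real \<Rightarrow> real) set \<Rightarrow> ('i \<Rightarrow> real \<Rightarrow> real) set \<Rightarrow> bool" where
  "minimal_generators G B \<longleftrightarrow> alg_gen G = B \<and> (\<forall>s\<in>G. s \<notin> alg_gen (G - {s}))"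

definition algebrable :: "'m set \<Rightarrow> ('i \<Rightarrow> real \<Rightarrow> real) set \<Rightarrow> bool" where
  "algebrable M S \<longleftrightarrow> (\<exists>B G. subalg B \<and> B - {\<lambda>i x. 0} \<subseteq> S \<and> vdim_eq B M \<and>
       minimal_generators G B \<and> (card_of G, card_of M) \<in> ordIso)"

end

theory Submission
  imports Defs
begin
unbundle cardinal_syntax

lemma wf_choice:
  assumes "wf R"
    and ex: "\<And>a g. \<exists>t. P a g t"
    and cong: "\<And>a g g' t. (\<And>b. (b,a) \<in> R \<Longrightarrow> g b = g' b) \<Longrightarrow> P a g t \<Longrightarrow> P a g' t"
  shows "\<exists>f. \<forall>a. P a f (f a)"
proof -
  define f where "f = wfrec R (\<lambda>g a. SOME t. P a g t)"
  have "f a = (SOME t. P a (cut f R a) t)" for a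
    using def_wfrec[OF f_def[THEN eq_reflection] assms(1)] by simp
  then have "P a (cut f R a) (f a)" for a using someI_ex[OF ex] by metis
  then have "P a f (f a)" for a
    by (rule cong[rotated]) (simp add: cut_apply)
  then show ?thesis by blast
qed

lemma card_of_lists_UNIV_infinite:
  assumes "infinite (UNIV :: 'a set)"
  shows "|UNIV :: 'a list set| \<le>o |UNIV :: 'a set|"
proof -
  have len: "|{xs :: 'a list. length xs = n}| \<le>o |UNIV :: 'a set|" for n
  proof (induction n)
    case 0
    have "{xs :: 'a list. length xs = 0} = {[]}" by auto
    then show ?case using card_of_singl_ordLeq[of "UNIV :: 'a set"] by simp
  next
    case (Suc n)
    have "{xs :: 'a list. length xs = Suc n} = (\<lambda>(x,xs). x # xs) ` (UNIV \<times> {xs. length xs = n})"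
      by (auto simp: length_Suc_conv)
    then have "|{xs :: 'a list. length xs = Suc n}| \<le>o |(UNIV :: 'a set) \<times> {xs :: 'a list. length xs = n}|"
      by (metis card_of_image)
    also have "|(UNIV :: 'a set) \<times> {xs :: 'a list. length xs = n}| \<le>o |(UNIV :: 'a set) \<times> (UNIV :: 'a set)|"
      using Suc card_of_Times_mono2 by blast
    also have "|(UNIV :: 'a set) \<times> (UNIV :: 'a set)| =o |UNIV :: 'a set|"
      using assms card_of_Times_same_infinite by blast
    finally show ?case using ordIso_imp_ordLeq by blast
  qed
  have "(UNIV :: 'a list set) = (\<Union>n\<in>(UNIV::nat set). {xs. length xs = n})" by auto
  moreover have "|\<Union>n\<in>(UNIV::nat set). {xs :: 'a list. length xs = n}| \<le>o |UNIV :: 'a set|"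
    apply (rule card_of_UNION_ordLeq_infinite[OF assms])
    using assms infinite_iff_card_of_nat card_of_nat ordIso_ordLeq_trans ordIso_symmetric
    apply (metis)
    using len by blast
  ultimately show ?thesis by simp
qed

locale pieces_setup =
  fixes r :: "('i \<times> 'i) set" and P :: "'i \<Rightarrow> real set"
  assumes co: "card_order r"
    and inf: "infinite (UNIV :: 'i set)"
    and small_null: "\<And>S::real set. |S| <o |UNIV::'i set| \<Longrightarrow> S \<in> null_sets lebesgue"
    and disj: "\<And>a b. a \<noteq> b \<Longrightarrow> P a \<inter> P b = {}"
    and cardX: "|\<Union>(range P)| \<le>o |UNIV::'i set|"
    and nonmeas: "\<And>S. S \<noteq> {} \<Longrightarrow> (\<Union>a\<in>S. P a) \<notin> sets lebesgue"
begin

lemma Fr: "Field r = UNIV"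
  using co card_order_on_well_order_on well_order_on_Field by metis

lemma Cr: "Card_order r"
  using co card_order_on_Card_order Fr by metis

lemma wo: "Well_order r"
  using Cr card_order_on_def by blast

lemma r_iso: "ordIso2 r |UNIV :: 'i set|"
  using card_of_Field_ordIso[OF Cr] Fr ordIso_symmetric by metis

lemma underS_small: "|underS r a| <o |UNIV :: 'i set|"
  using card_of_underS[OF Cr] Fr r_iso ordLess_ordIso_trans by blast

lemma r_refl: "(a,a) \<in> r"
  using wo Fr unfolding order_on_defs refl_on_def by auto

lemma r_trans: "(a,b) \<in> r \<Longrightarrow> (b,c) \<in> r \<Longrightarrow> (a,c) \<in> r"
  using wo unfolding order_on_defs trans_def by blast

lemma r_antisym: "(a,b) \<in> r \<Longrightarrow> (b,a) \<in> r \<Longrightarrow> a = b"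
  using wo unfolding order_on_defs antisym_def by blast

lemma r_total: "(a,b) \<in> r \<or> (b,a) \<in> r"
  using wo Fr r_refl unfolding order_on_defs total_on_def by (cases "a = b") auto

lemma no_max: "\<exists>b. a \<in> underS r b"
proof -
  have "\<not> (\<exists>a. Field r = under r a)"
    using Card_order_infinite_not_under[OF Cr] Fr inf by simp
  then obtain b where "b \<notin> under r a" using Fr by auto
  then have "(b,a) \<notin> r" by (simp add: under_def)
  then have "(a,b) \<in> r" "a \<noteq> b" using r_total r_refl by auto
  then show ?thesis by (auto simp: underS_def)
qed

lemma above2: "\<exists>i. j1 \<in> underS r i \<and> j2 \<in> underS r i"
proof -
  have *: "\<exists>i. j1 \<in> underS r i \<and> j2 \<in> underS r i" if "(j1,j2) \<in> r" for j1 j2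
  proof -
    obtain i where i: "j2 \<in> underS r i" using no_max by blast
    then have "(j2,i) \<in> r" "j2 \<noteq> i" by (auto simp: underS_def)
    then have "(j1,i) \<in> r" using that r_trans by blast
    moreover have "j1 \<noteq> i" using that \<open>(j2,i) \<in> r\<close> \<open>j2 \<noteq> i\<close> r_antisym by blast
    ultimately show ?thesis using i by (auto simp: underS_def)
  qed
  show ?thesis using *[of j1 j2] *[of j2 j1] r_total by blast
qed

definition X where "X = \<Union>(range P)"

lemma P_ne: "P a \<noteq> {}"
  using nonmeas[of "{a}"] by auto

lemma X_ne: "X \<noteq> {}" using P_ne X_def by auto

definition e :: "'i \<Rightarrow> real" where "e = (SOME e. range e = X)"

lemma range_e: "range e = X"
proof -
  have "\<exists>e0 :: 'i \<Rightarrow> real. e0 ` UNIV = X"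
    using card_of_ordLeq2[OF X_ne, of "UNIV :: 'i set"] cardX unfolding X_def by simp
  then obtain e0 :: "'i \<Rightarrow> real" where "e0 ` UNIV = X" by blast
  then show ?thesis unfolding e_def by (rule someI[of "\<lambda>e. range e = X"])
qed

definition D where "D i = e ` underS r i"

lemma D_null: "D i \<in> null_sets lebesgue"
proof -
  have "|D i| \<le>o |underS r i|" unfolding D_def by (rule card_of_image)
  then show ?thesis using small_null underS_small ordLeq_ordLess_trans by blast
qed

lemma D_X: "D i \<subseteq> X" unfolding D_def using range_e by auto

lemma in_D: "x \<in> X \<Longrightarrow> \<exists>j. x = e j \<and> (\<forall>i. j \<in> underS r i \<longrightarrow> x \<in> D i)"
proof -
  assume "x \<in> X"
  then obtain j where "x = e j" using range_e by (metis rangeE)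
  then show ?thesis unfolding D_def by auto
qed

lemma in_D2: assumes "x1 \<in> X" "x2 \<in> X" shows "\<exists>i. x1 \<in> D i \<and> x2 \<in> D i"
proof -
  obtain j1 where j1: "\<forall>i. j1 \<in> underS r i \<longrightarrow> x1 \<in> D i" using in_D[OF assms(1)] by blast
  obtain j2 where j2: "\<forall>i. j2 \<in> underS r i \<longrightarrow> x2 \<in> D i" using in_D[OF assms(2)] by blast
  obtain i where "j1 \<in> underS r i" "j2 \<in> underS r i" using above2 by blast
  then show ?thesis using j1 j2 by blast
qed

definition Seq :: "(real \<Rightarrow> real) \<Rightarrow> 'i \<Rightarrow> real \<Rightarrow> real" where
  "Seq h = (\<lambda>i x. if x \<in> D i then h x else 0)"

definition iota :: "'i list \<times> 'i list list \<Rightarrow> 'i" where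
  "iota = (SOME f. inj f)"

lemma inj_iota: "inj iota"
proof -
  have inf2: "infinite (UNIV :: 'i list set)" using infinite_UNIV_listI by blast
  have a: "|UNIV :: 'i list set| \<le>o |UNIV :: 'i set|" using card_of_lists_UNIV_infinite inf by blast
  have b: "|UNIV :: 'i list list set| \<le>o |UNIV :: 'i list set|" using card_of_lists_UNIV_infinite inf2 by blast
  have c1: "|(UNIV :: 'i list set) \<times> (UNIV :: 'i list list set)| \<le>o |(UNIV :: 'i list set) \<times> (UNIV :: 'i list set)|"
    by (rule card_of_Times_mono2[OF b])
  have c2: "|(UNIV :: 'i list set) \<times> (UNIV :: 'i list set)| \<le>o |(UNIV :: 'i set) \<times> (UNIV :: 'i list set)|"
    by (rule card_of_Times_mono1[OF a])
  have c3: "|(UNIV :: 'i set) \<times> (UNIV :: 'i list set)| \<le>o |(UNIV :: 'i set) \<times> (UNIV :: 'i set)|"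
    by (rule card_of_Times_mono2[OF a])
  have c4: "ordIso2 |(UNIV :: 'i set) \<times> (UNIV :: 'i set)| |UNIV :: 'i set|"
    using inf card_of_Times_same_infinite by blast
  have "|(UNIV :: 'i list set) \<times> (UNIV :: 'i list list set)| \<le>o |UNIV :: 'i set|"
    using ordLeq_ordIso_trans[OF ordLeq_transitive[OF ordLeq_transitive[OF c1 c2] c3] c4] .
  then have "|UNIV :: ('i list \<times> 'i list list) set| \<le>o |UNIV :: 'i set|"
    by (simp only: UNIV_Times_UNIV)
  then have "\<exists>f :: 'i list \<times> 'i list list \<Rightarrow> 'i. inj_on f UNIV \<and> f ` UNIV \<subseteq> UNIV"
    by (simp only: card_of_ordLeq[symmetric])
  then have "\<exists>f :: 'i list \<times> 'i list list \<Rightarrow> 'i. inj f" by blast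
  then show ?thesis unfolding iota_def by (rule someI_ex)
qed

definition W :: "'i set \<Rightarrow> ('i list \<times> 'i list list) set" where
  "W A = {(xs,yss). filter (\<lambda>x. x \<in> A) xs \<in> set yss}"

lemma filter_eq_imp: assumes "filter p xs = filter q xs" "x \<in> set xs" shows "p x = q x"
proof -
  have "x \<in> set (filter p xs) \<longleftrightarrow> x \<in> set (filter q xs)" using assms(1) by simp
  then show ?thesis using assms(2) by auto
qed

lemma W_indep:
  assumes "finite T" "A \<notin> T"
  shows "\<exists>c1 c2. c1 \<in> W A \<and> c2 \<notin> W A \<and> (\<forall>B\<in>T. c1 \<in> W B \<and> c2 \<in> W B)"
proof -
  obtain Ts where Ts: "set Ts = T" using assms(1) finite_list by blast
  have "\<forall>B\<in>T. \<exists>d. (d \<in> A) \<noteq> (d \<in> B)"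
  proof
    fix B assume "B \<in> T"
    then have "A \<noteq> B" using assms(2) by blast
    then show "\<exists>d. (d \<in> A) \<noteq> (d \<in> B)" by blast
  qed
  then obtain d where d: "\<And>B. B \<in> T \<Longrightarrow> (d B \<in> A) \<noteq> (d B \<in> B)" by metis
  define xs where "xs = map d Ts"
  define yss where "yss = map (\<lambda>B. filter (\<lambda>x. x \<in> B) xs) Ts"
  have ne: "filter (\<lambda>x. x \<in> A) xs \<notin> set yss"
  proof
    assume "filter (\<lambda>x. x \<in> A) xs \<in> set yss"
    then obtain B where B: "B \<in> T" "filter (\<lambda>x. x \<in> A) xs = filter (\<lambda>x. x \<in> B) xs"
      unfolding yss_def using Ts by auto
    have "d B \<in> set xs" unfolding xs_def using B Ts by auto
    then show False using filter_eq_imp[OF B(2)] d[OF B(1)] by blast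
  qed
  show ?thesis
  proof (intro exI conjI ballI)
    show "(xs, filter (\<lambda>x. x \<in> A) xs # yss) \<in> W A" by (simp add: W_def)
    show "(xs, yss) \<notin> W A" using ne by (simp add: W_def)
    fix B assume B: "B \<in> T"
    have "filter (\<lambda>x. x \<in> B) xs \<in> set yss" unfolding yss_def using B Ts by simp
    then show "(xs, filter (\<lambda>x. x \<in> A) xs # yss) \<in> W B" "(xs, yss) \<in> W B"
      by (simp_all add: W_def)
  qed
qed

definition XA where "XA A = (\<Union>c\<in>W A. P (iota c))"

definition g where "g A = Seq (indicator (XA A))"

lemma XA_X: "XA A \<subseteq> X" unfolding XA_def X_def by auto

lemma points:
  assumes "finite T" "A \<notin> T"
  shows "\<exists>i x1 x2. g A i x1 = 1 \<and> g A i x2 = 0 \<and> (\<forall>B\<in>T. g B i x1 = 1 \<and> g B i x2 = 1)"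
proof -
  obtain c1 c2 where c: "c1 \<in> W A" "c2 \<notin> W A" "\<forall>B\<in>T. c1 \<in> W B \<and> c2 \<in> W B"
    using W_indep[OF assms] by blast
  obtain x1 where x1: "x1 \<in> P (iota c1)" using P_ne by blast
  obtain x2 where x2: "x2 \<in> P (iota c2)" using P_ne by blast
  have "x1 \<in> X" "x2 \<in> X" using x1 x2 X_def by auto
  then obtain i where i: "x1 \<in> D i" "x2 \<in> D i" using in_D2 by blast
  have x1A: "x1 \<in> XA B" if "c1 \<in> W B" for B using that x1 XA_def by auto
  have x2A: "x2 \<in> XA B" if "c2 \<in> W B" for B using that x2 XA_def by auto
  have x2nA: "x2 \<notin> XA A"
  proof
    assume "x2 \<in> XA A"
    then obtain c where "c \<in> W A" "x2 \<in> P (iota c)" unfolding XA_def by auto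
    then have "iota c = iota c2" using disj x2 by blast
    then have "c = c2" using inj_iota by (simp add: inj_eq)
    then show False using \<open>c \<in> W A\<close> c by simp
  qed
  have "g A i x1 = 1" using i c(1) x1A by (simp add: g_def Seq_def)
  moreover have "g A i x2 = 0" using i x2nA by (simp add: g_def Seq_def)
  moreover have "\<forall>B\<in>T. g B i x1 = 1 \<and> g B i x2 = 1"
    using i c(3) x1A x2A by (simp add: g_def Seq_def)
  ultimately show ?thesis by blast
qed

lemma g_inj: "inj g"
proof
  fix A B assume "g A = g B"
  show "A = B"
  proof (rule ccontr)
    assume "A \<noteq> B"
    then obtain i x1 x2 where "g A i x1 = 1" "g A i x2 = 0" "g B i x1 = 1" "g B i x2 = 1"
      using points[of "{B}" A] by auto
    then show False using \<open>g A = g B\<close> by (metis zero_neq_one)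
  qed
qed

end

lemma subalg_Inter: "(\<And>B. B \<in> \<B> \<Longrightarrow> subalg B) \<Longrightarrow> subalg (\<Inter>\<B>)"
  unfolding subalg_def by auto

lemma subalg_UNIV: "subalg UNIV" unfolding subalg_def by auto

lemma subalg_alg_gen: "subalg (alg_gen G)"
  unfolding alg_gen_def by (rule subalg_Inter) auto

lemma alg_gen_least: "subalg B \<Longrightarrow> G \<subseteq> B \<Longrightarrow> alg_gen G \<subseteq> B"
  unfolding alg_gen_def by auto

lemma alg_gen_sup: "G \<subseteq> alg_gen G"
  unfolding alg_gen_def by auto

lemma subalg_sum:
  assumes "subalg B" "finite T" "T \<subseteq> B"
  shows "(\<lambda>i x. \<Sum>t\<in>T. c t * t i x) \<in> B"
  using assms(2,3)
proof (induction T rule: finite_induct)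
  case empty
  then show ?case using assms(1) unfolding subalg_def by simp
next
  case (insert t T)
  have a: "(\<lambda>i x. c t * t i x) \<in> B" using insert assms(1) unfolding subalg_def by blast
  have b: "(\<lambda>i x. \<Sum>t\<in>T. c t * t i x) \<in> B" using insert by blast
  have "\<forall>F\<in>B. \<forall>G\<in>B. (\<lambda>i x. F i x + G i x) \<in> B" using assms(1) unfolding subalg_def by blast
  from this[rule_format, OF a b] have "(\<lambda>i x. (c t * t i x) + (\<Sum>t\<in>T. c t * t i x)) \<in> B" by simp
  then show ?case using insert by simp
qed

lemma lin_span_subset: "subalg B \<Longrightarrow> H \<subseteq> B \<Longrightarrow> lin_span H \<subseteq> B"
  unfolding lin_span_def using subalg_sum by blast

lemma in_lin_span: "t \<in> H \<Longrightarrow> t \<in> lin_span H"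
  unfolding lin_span_def
  by (rule CollectI, rule exI[of _ "{t}"], rule exI[of _ "\<lambda>_. 1"]) auto

lemma lin_indep_insert:
  assumes ind: "lin_indep H" and F: "F \<notin> lin_span H"
  shows "lin_indep (insert F H)"
  unfolding lin_indep_def
proof (intro allI impI)
  fix T c
  assume a: "finite T \<and> T \<subseteq> insert F H \<and> (\<lambda>i x. \<Sum>t\<in>T. c t * t i x) = (\<lambda>i x. 0)"
  show "\<forall>t\<in>T. c t = 0"
  proof
  fix t assume t: "t \<in> T"
  have FH: "F \<notin> H" using F in_lin_span by blast
  have zero: "\<And>i x. (\<Sum>t\<in>T. c t * t i x) = 0" using a by meson
  show "c t = 0"
  proof (cases "F \<in> T \<and> c F \<noteq> 0")
    case True
    have fin: "finite (T - {F})" using a by simp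
    have split: "(\<Sum>t\<in>T. c t * t i x) = c F * F i x + (\<Sum>t\<in>T-{F}. c t * t i x)" for i x
      by (rule sum.remove) (use a True in auto)
    have Fe: "F = (\<lambda>i x. \<Sum>t\<in>T-{F}. (- c t / c F) * t i x)"
    proof (intro ext)
      fix i x
      have "c F * F i x = - (\<Sum>t\<in>T-{F}. c t * t i x)" using split[of i x] zero[of i x] by simp
      then have "F i x = (- 1 / c F) * (\<Sum>t\<in>T-{F}. c t * t i x)" using True by (simp add: field_simps)
      also have "\<dots> = (\<Sum>t\<in>T-{F}. (- c t / c F) * t i x)"
        by (simp add: sum_distrib_left)
      finally show "F i x = (\<Sum>t\<in>T-{F}. (- c t / c F) * t i x)" .
    qed
    have TH: "T - {F} \<subseteq> H" using a by auto
    have "F \<in> lin_span H" unfolding lin_span_def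
      apply (rule CollectI)
      apply (rule exI[of _ "T - {F}"])
      apply (rule exI[of _ "\<lambda>t. - c t / c F"])
      using fin TH Fe by blast
    then show ?thesis using F by blast
  next
    case False
    note nF = False
    define T' where "T' = T - {F}"
    have "(\<Sum>t\<in>T. c t * t i x) = (\<Sum>t\<in>T'. c t * t i x)" for i x
    proof (cases "F \<in> T")
      case True
      then have "c F = 0" using False by blast
      have "(\<Sum>t\<in>T. c t * t i x) = c F * F i x + (\<Sum>t\<in>T-{F}. c t * t i x)"
        by (rule sum.remove) (use a True in auto)
      then show ?thesis unfolding T'_def using \<open>c F = 0\<close> by simp
    next
      case False
      then show ?thesis unfolding T'_def by simp
    qed
    then have z: "(\<lambda>i x. \<Sum>t\<in>T'. c t * t i x) = (\<lambda>i x. 0)" using zero by simp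
    have "finite T'" "T' \<subseteq> H" using a unfolding T'_def by auto
    moreover have "finite T' \<and> T' \<subseteq> H \<and> (\<lambda>i x. \<Sum>t\<in>T'. c t * t i x) = (\<lambda>i x. 0) \<longrightarrow> (\<forall>t\<in>T'. c t = 0)"
      using ind[unfolded lin_indep_def, THEN spec[of _ T'], THEN spec[of _ c]] .
    ultimately have all0: "\<forall>t\<in>T'. c t = 0" using z by blast
    show ?thesis
    proof (cases "t = F")
      case True
      then show ?thesis using t nF by blast
    next
      case False
      then have "t \<in> T'" using t unfolding T'_def by blast
      then show ?thesis using all0 by blast
    qed
  qed
  qed
qed

lemma basis_extend:
  assumes B: "subalg B" and H0: "H0 \<subseteq> B" "lin_indep H0"
  shows "\<exists>H. H0 \<subseteq> H \<and> H \<subseteq> B \<and> lin_indep H \<and> lin_span H = B"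
proof -
  define Fam where "Fam = {H. H0 \<subseteq> H \<and> H \<subseteq> B \<and> lin_indep H}"
  have "\<exists>M\<in>Fam. \<forall>Y\<in>Fam. M \<subseteq> Y \<longrightarrow> Y = M"
  proof (rule Zorn_Lemma2, intro ballI)
    fix C assume C: "C \<in> chains Fam"
    show "\<exists>U\<in>Fam. \<forall>Y\<in>C. Y \<subseteq> U"
    proof (cases "C = {}")
      case True
      then show ?thesis using H0 Fam_def by blast
    next
      case False
      have CF: "C \<subseteq> Fam" and ch: "subset.chain Fam C" using C by (auto simp: chains_alt_def subset.chain_def)
      have "lin_indep (\<Union>C)"
        unfolding lin_indep_def
      proof (intro allI impI)
        fix T c
        assume a: "finite T \<and> T \<subseteq> \<Union>C \<and> (\<lambda>i x. \<Sum>t\<in>T. c t * t i x) = (\<lambda>i x. 0)"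
        then obtain Y where "Y \<in> C" "T \<subseteq> Y"
          using finite_subset_Union_chain[of T C Fam] False ch by blast
        then show "\<forall>t\<in>T. c t = 0" using a CF unfolding Fam_def lin_indep_def by blast
      qed
      then have "\<Union>C \<in> Fam" using False CF unfolding Fam_def by blast
      then show ?thesis by blast
    qed
  qed
  then obtain M where M: "M \<in> Fam" "\<And>Y. Y \<in> Fam \<Longrightarrow> M \<subseteq> Y \<Longrightarrow> Y = M" by blast
  have "lin_span M = B"
  proof
    show "lin_span M \<subseteq> B" using lin_span_subset B M(1) Fam_def by blast
    show "B \<subseteq> lin_span M"
    proof
      fix F assume F: "F \<in> B"
      show "F \<in> lin_span M"
      proof (rule ccontr)
        assume n: "F \<notin> lin_span M"
        have "insert F M \<in> Fam" using lin_indep_insert[OF _ n] M(1) F unfolding Fam_def by blast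
        then have "insert F M = M" using M(2) by blast
        then show False using n in_lin_span by blast
      qed
    qed
  qed
  then show ?thesis using M(1) Fam_def by blast
qed

context pieces_setup
begin

definition goodh :: "(real \<Rightarrow> real) \<Rightarrow> bool" where
  "goodh h \<longleftrightarrow> finite (range h) \<and> (\<forall>x. x \<notin> X \<longrightarrow> h x = 0) \<and> (\<forall>a x y. x \<in> P a \<longrightarrow> y \<in> P a \<longrightarrow> h x = h y)"

definition Good where "Good = Seq ` {h. goodh h}"

lemma goodh_add: "goodh h \<Longrightarrow> goodh h' \<Longrightarrow> goodh (\<lambda>x. h x + h' x)"
proof -
  assume a: "goodh h" "goodh h'"
  have "range (\<lambda>x. h x + h' x) \<subseteq> (\<lambda>(u,v). u + v) ` (range h \<times> range h')" by auto
  moreover have "finite ((\<lambda>(u,v). u + v) ` (range h \<times> range h'))" using a unfolding goodh_def by simp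
  ultimately have "finite (range (\<lambda>x. h x + h' x))" by (rule finite_subset)
  moreover have "\<forall>x. x \<notin> X \<longrightarrow> h x + h' x = 0" using a unfolding goodh_def by simp
  moreover have "\<forall>b x y. x \<in> P b \<longrightarrow> y \<in> P b \<longrightarrow> h x + h' x = h y + h' y"
  proof (intro allI impI)
    fix b x y assume "x \<in> P b" "y \<in> P b"
    then have "h x = h y" "h' x = h' y" using a unfolding goodh_def by blast+
    then show "h x + h' x = h y + h' y" by simp
  qed
  ultimately show ?thesis unfolding goodh_def by blast
qed

lemma goodh_mult: "goodh h \<Longrightarrow> goodh h' \<Longrightarrow> goodh (\<lambda>x. h x * h' x)"
proof -
  assume a: "goodh h" "goodh h'"
  have "range (\<lambda>x. h x * h' x) \<subseteq> (\<lambda>(u,v). u * v) ` (range h \<times> range h')" by auto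
  moreover have "finite ((\<lambda>(u,v). u * v) ` (range h \<times> range h'))" using a unfolding goodh_def by simp
  ultimately have "finite (range (\<lambda>x. h x * h' x))" by (rule finite_subset)
  moreover have "\<forall>x. x \<notin> X \<longrightarrow> h x * h' x = 0" using a unfolding goodh_def by simp
  moreover have "\<forall>b x y. x \<in> P b \<longrightarrow> y \<in> P b \<longrightarrow> h x * h' x = h y * h' y"
  proof (intro allI impI)
    fix b x y assume "x \<in> P b" "y \<in> P b"
    then have "h x = h y" "h' x = h' y" using a unfolding goodh_def by blast+
    then show "h x * h' x = h y * h' y" by simp
  qed
  ultimately show ?thesis unfolding goodh_def by blast
qed

lemma goodh_scale: "goodh h \<Longrightarrow> goodh (\<lambda>x. c * h x)"
proof -
  assume a: "goodh h"
  have "range (\<lambda>x. c * h x) = (\<lambda>u. c * u) ` range h" by auto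
  then have "finite (range (\<lambda>x. c * h x))" using a unfolding goodh_def by simp
  moreover have "\<forall>x. x \<notin> X \<longrightarrow> c * h x = 0" using a unfolding goodh_def by simp
  moreover have "\<forall>b x y. x \<in> P b \<longrightarrow> y \<in> P b \<longrightarrow> c * h x = c * h y"
  proof (intro allI impI)
    fix b x y assume "x \<in> P b" "y \<in> P b"
    then have "h x = h y" using a unfolding goodh_def by blast
    then show "c * h x = c * h y" by simp
  qed
  ultimately show ?thesis unfolding goodh_def by blast
qed

lemma goodh_zero: "goodh (\<lambda>x. 0)"
  unfolding goodh_def by auto

lemma Seq_add: "(\<lambda>i x. Seq h i x + Seq h' i x) = Seq (\<lambda>x. h x + h' x)"
  by (auto simp: Seq_def fun_eq_iff)
lemma Seq_mult: "(\<lambda>i x. Seq h i x * Seq h' i x) = Seq (\<lambda>x. h x * h' x)"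
  by (auto simp: Seq_def fun_eq_iff)
lemma Seq_scale: "(\<lambda>i x. c * Seq h i x) = Seq (\<lambda>x. c * h x)"
  by (auto simp: Seq_def fun_eq_iff)
lemma Seq_zero: "(\<lambda>i x. 0) = Seq (\<lambda>x. 0)"
  by (auto simp: Seq_def fun_eq_iff)

lemma subalg_Good: "subalg Good"
  unfolding subalg_def Good_def
proof (intro conjI ballI allI)
  show "(\<lambda>i x. 0) \<in> Seq ` {h. goodh h}" using Seq_zero goodh_zero by auto
next
  fix F G assume "F \<in> Seq ` {h. goodh h}" "G \<in> Seq ` {h. goodh h}"
  then obtain h h' where "F = Seq h" "G = Seq h'" "goodh h" "goodh h'" by auto
  then show "(\<lambda>i x. F i x + G i x) \<in> Seq ` {h. goodh h}" "(\<lambda>i x. F i x * G i x) \<in> Seq ` {h. goodh h}"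
    using Seq_add Seq_mult goodh_add goodh_mult by auto
next
  fix F and c :: real assume "F \<in> Seq ` {h. goodh h}"
  then obtain h where "F = Seq h" "goodh h" by auto
  then show "(\<lambda>i x. c * F i x) \<in> Seq ` {h. goodh h}" using Seq_scale goodh_scale by auto
qed

lemma XA_piece: "x \<in> P a \<Longrightarrow> x \<in> XA A \<longleftrightarrow> (\<exists>c\<in>W A. iota c = a)"
  unfolding XA_def using disj by blast

lemma g_Good: "g A \<in> Good"
proof -
  have "range (indicator (XA A) :: real \<Rightarrow> real) \<subseteq> {0,1}" by (auto simp: indicator_def)
  then have "finite (range (indicator (XA A) :: real \<Rightarrow> real))" by (rule finite_subset) simp
  moreover have "\<forall>x. x \<notin> X \<longrightarrow> (indicator (XA A) x :: real) = 0"
    using XA_X[of A] by (auto simp: indicator_def)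
  moreover have "\<forall>a x y. x \<in> P a \<longrightarrow> y \<in> P a \<longrightarrow> (indicator (XA A) x :: real) = indicator (XA A) y"
    using XA_piece by (simp add: indicator_def)
  ultimately have "goodh (indicator (XA A))" unfolding goodh_def by blast
  then show ?thesis unfolding Good_def g_def by blast
qed

lemma Seq_meas: "Seq h i \<in> borel_measurable lebesgue"
proof (rule borel_measurable_AE[of "\<lambda>x. 0"])
  show "(\<lambda>x. 0::real) \<in> borel_measurable lebesgue" by simp
  show "AE x in lebesgue. 0 = Seq h i x"
    using AE_not_in[OF D_null[of i]] by eventually_elim (simp add: Seq_def)
qed

lemma Seq_conv: "goodh h \<Longrightarrow> kconv r (\<lambda>i. Seq h i x) (h x)"
  unfolding kconv_def
proof (intro allI impI)
  fix U assume h: "goodh h" and U: "open U \<and> h x \<in> U"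
  show "\<exists>a0\<in>Field r. \<forall>a\<in>Field r. (a0, a) \<in> r \<and> a \<noteq> a0 \<longrightarrow> Seq h a x \<in> U"
  proof (cases "x \<in> X")
    case True
    then obtain j where j: "\<forall>i. j \<in> underS r i \<longrightarrow> x \<in> D i" using in_D by blast
    show ?thesis
    proof (intro bexI[of _ j] ballI impI)
      fix a assume "(j,a) \<in> r \<and> a \<noteq> j"
      then have "j \<in> underS r a" by (auto simp: underS_def)
      then show "Seq h a x \<in> U" using j U by (simp add: Seq_def)
    qed (simp add: Fr)
  next
    case False
    then have "x \<notin> D a" for a using D_X by blast
    moreover have "h x = 0" using False h unfolding goodh_def by blast
    ultimately show ?thesis using U by (simp add: Seq_def Fr)
  qed
qed

lemma Seq_nonzero: "Seq h \<noteq> (\<lambda>i x. 0) \<Longrightarrow> \<exists>x. h x \<noteq> 0"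
  unfolding Seq_def by (auto simp: fun_eq_iff split: if_splits)

lemma Good_AN: "F \<in> Good \<Longrightarrow> F \<noteq> (\<lambda>i x. 0) \<Longrightarrow> F \<in> AN r"
proof -
  assume F: "F \<in> Good" "F \<noteq> (\<lambda>i x. 0)"
  then obtain h where h: "F = Seq h" "goodh h" unfolding Good_def by blast
  then obtain x0 where x0: "h x0 \<noteq> 0" using Seq_nonzero F by blast
  have x0X: "x0 \<in> X" using x0 h unfolding goodh_def by blast
  then obtain a0 where a0: "x0 \<in> P a0" unfolding X_def by blast
  define S where "S = {a. \<exists>y\<in>P a. h y = h x0}"
  have "a0 \<in> S" using a0 S_def by blast
  have pre: "h -` {h x0} = (\<Union>a\<in>S. P a)"
  proof
    show "h -` {h x0} \<subseteq> (\<Union>a\<in>S. P a)"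
    proof
      fix y assume "y \<in> h -` {h x0}"
      then have y: "h y = h x0" by simp
      then have "y \<in> X" using x0 h unfolding goodh_def by metis
      then obtain a where "y \<in> P a" unfolding X_def by blast
      then show "y \<in> (\<Union>a\<in>S. P a)" using y S_def by blast
    qed
    show "(\<Union>a\<in>S. P a) \<subseteq> h -` {h x0}"
    proof
      fix y assume "y \<in> (\<Union>a\<in>S. P a)"
      then obtain a y' where "y \<in> P a" "y' \<in> P a" "h y' = h x0" using S_def by blast
      then have "h y = h y'" using h unfolding goodh_def by blast
      then show "y \<in> h -` {h x0}" using \<open>h y' = h x0\<close> by simp
    qed
  qed
  have nm: "h \<notin> borel_measurable lebesgue"
  proof
    assume "h \<in> borel_measurable lebesgue"
    then have "h -` {h x0} \<inter> space lebesgue \<in> sets lebesgue"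
      by (rule measurable_sets) simp
    then have "(\<Union>a\<in>S. P a) \<in> sets lebesgue" using pre by simp
    then show False using nonmeas \<open>a0 \<in> S\<close> by blast
  qed
  have "AE x in lebesgue. kconv r (\<lambda>i. F i x) (h x)" using Seq_conv h by simp
  then show "F \<in> AN r" unfolding AN_def using nm Seq_meas h by blast
qed

end

context pieces_setup
begin

definition RT :: "('i \<Rightarrow> real \<Rightarrow> real) set \<Rightarrow> ('i \<Rightarrow> real \<Rightarrow> real) set" where
  "RT T = {F. \<forall>i x y. (\<forall>t\<in>T. t i x = t i y) \<longrightarrow> F i x = F i y}"

lemma RT_mono: "T \<subseteq> T' \<Longrightarrow> RT T \<subseteq> RT T'"
  unfolding RT_def by blast

lemma subalg_K:
  "subalg {F. \<exists>T. finite T \<and> T \<subseteq> S \<and> F \<in> RT T}" (is "subalg ?K")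
  unfolding subalg_def
proof (intro conjI ballI allI)
  show "(\<lambda>i x. 0) \<in> ?K" by (rule CollectI, rule exI[of _ "{}"]) (simp add: RT_def)
next
  fix F G assume F: "F \<in> ?K" and G: "G \<in> ?K"
  then obtain T T' where T: "finite T" "T \<subseteq> S" "F \<in> RT T" and T': "finite T'" "T' \<subseteq> S" "G \<in> RT T'" by blast
  have FF: "F \<in> RT (T \<union> T')" "G \<in> RT (T \<union> T')" using T T' RT_mono[of T "T \<union> T'"] RT_mono[of T' "T \<union> T'"] by auto
  have fin: "finite (T \<union> T')" "T \<union> T' \<subseteq> S" using T T' by auto
  have "(\<lambda>i x. F i x + G i x) \<in> RT (T \<union> T')" using FF unfolding RT_def by simp
  then show "(\<lambda>i x. F i x + G i x) \<in> ?K" using fin by blast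
  have "(\<lambda>i x. F i x * G i x) \<in> RT (T \<union> T')" using FF unfolding RT_def by simp
  then show "(\<lambda>i x. F i x * G i x) \<in> ?K" using fin by blast
next
  fix F and c :: real assume "F \<in> ?K"
  then obtain T where T: "finite T" "T \<subseteq> S" "F \<in> RT T" by blast
  have "(\<lambda>i x. c * F i x) \<in> RT T" using T unfolding RT_def by simp
  then show "(\<lambda>i x. c * F i x) \<in> ?K" using T by blast
qed

lemma minimal: "minimal_generators (range g) (alg_gen (range g))"
  unfolding minimal_generators_def
proof (intro conjI ballI refl)
  fix s assume "s \<in> range g"
  then obtain A where sA: "s = g A" by blast
  let ?K = "{F. \<exists>T. finite T \<and> T \<subseteq> range g - {s} \<and> F \<in> RT T}"
  have "range g - {s} \<subseteq> ?K"
  proof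
    fix t assume "t \<in> range g - {s}"
    moreover have "t \<in> RT {t}" unfolding RT_def by simp
    ultimately show "t \<in> ?K" by blast
  qed
  then have sub: "alg_gen (range g - {s}) \<subseteq> ?K" by (rule alg_gen_least[OF subalg_K])
  have "s \<notin> ?K"
  proof
    assume "s \<in> ?K"
    then obtain T where T: "finite T" "T \<subseteq> range g - {s}" "s \<in> RT T" by blast
    define TT where "TT = {B. g B \<in> T}"
    have "TT = g -` T" unfolding TT_def by auto
    then have "finite TT" using finite_vimageI[OF T(1) g_inj] by simp
    moreover have "A \<notin> TT" using T(2) sA unfolding TT_def by blast
    ultimately obtain i x1 x2 where p: "g A i x1 = 1" "g A i x2 = 0" "\<forall>B\<in>TT. g B i x1 = 1 \<and> g B i x2 = 1"
      using points by blast
    have "\<forall>t\<in>T. t i x1 = t i x2"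
    proof
      fix t assume "t \<in> T"
      then obtain B where "t = g B" "B \<in> TT" using T(2) unfolding TT_def by blast
      then show "t i x1 = t i x2" using p(3) by simp
    qed
    then have "s i x1 = s i x2" using T(3) unfolding RT_def by blast
    then show False using p sA by simp
  qed
  then show "s \<notin> alg_gen (range g - {s})" using sub by blast
qed

lemma lin_indep_G: "lin_indep (range g)"
  unfolding lin_indep_def
proof (intro allI impI)
  fix T c
  assume a: "finite T \<and> T \<subseteq> range g \<and> (\<lambda>i x. \<Sum>t\<in>T. c t * t i x) = (\<lambda>i x. 0)"
  have zero: "\<And>i x. (\<Sum>t\<in>T. c t * t i x) = 0" using a by meson
  show "\<forall>t\<in>T. c t = 0"
  proof
    fix t assume t: "t \<in> T"
    then obtain A where tA: "t = g A" using a by blast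
    define TT where "TT = {B. g B \<in> T - {t}}"
    have "TT = g -` (T - {t})" unfolding TT_def by auto
    moreover have "finite (T - {t})" using a by blast
    ultimately have "finite TT" using finite_vimageI[OF _ g_inj] by simp
    moreover have "A \<notin> TT" using tA unfolding TT_def by blast
    ultimately obtain i x1 x2 where p: "g A i x1 = 1" "g A i x2 = 0" "\<forall>B\<in>TT. g B i x1 = 1 \<and> g B i x2 = 1"
      using points by blast
    have eq: "u i x1 = u i x2" if u: "u \<in> T - {t}" for u
    proof -
      obtain B where "u = g B" "B \<in> TT" using u a unfolding TT_def by blast
      then show ?thesis using p(3) by simp
    qed
    have fin: "finite T" using a by blast
    have s1: "(\<Sum>u\<in>T. c u * u i x1) = c t * t i x1 + (\<Sum>u\<in>T-{t}. c u * u i x1)"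
      by (rule sum.remove[OF fin t])
    have s2: "(\<Sum>u\<in>T. c u * u i x2) = c t * t i x2 + (\<Sum>u\<in>T-{t}. c u * u i x2)"
      by (rule sum.remove[OF fin t])
    have s3: "(\<Sum>u\<in>T-{t}. c u * u i x1) = (\<Sum>u\<in>T-{t}. c u * u i x2)"
      using eq by (intro sum.cong) auto
    have "c t * t i x1 = c t * t i x2" using s1 s2 s3 zero[of i x1] zero[of i x2] by linarith
    then show "c t = 0" using p tA by simp
  qed
qed

lemma card_G: "ordIso2 |range g| |Pow (UNIV :: 'i set)|"
proof -
  have "bij_betw g (UNIV :: 'i set set) (range g)" using g_inj by (simp add: bij_betw_def)
  then have "ordIso2 |UNIV :: 'i set set| |range g|" using card_of_ordIso by blast
  then show ?thesis using ordIso_symmetric by simp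
qed

end

lemma fun_real_lepoll_Pow:
  assumes inf: "infinite (UNIV :: 'i set)"
  shows "|UNIV :: ('i \<Rightarrow> real) set| \<le>o |UNIV :: 'i set set|"
proof -
  have "(UNIV :: real set) \<approx> (UNIV :: nat set set)" using nat_sets_eqpoll_reals eqpoll_sym by blast
  then obtain \<rho> :: "real \<Rightarrow> nat set" where "bij_betw \<rho> UNIV UNIV" unfolding eqpoll_def by blast
  then have inj\<rho>: "inj \<rho>" by (simp add: bij_betw_def)
  have n: "|UNIV :: nat set| \<le>o |UNIV :: 'i set|" using inf infinite_iff_card_of_nat by blast
  have "|(UNIV :: 'i set) \<times> (UNIV :: nat set)| \<le>o |(UNIV :: 'i set) \<times> (UNIV :: 'i set)|"
    by (rule card_of_Times_mono2[OF n])
  moreover have "ordIso2 |(UNIV :: 'i set) \<times> (UNIV :: 'i set)| |UNIV :: 'i set|"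
    using inf card_of_Times_same_infinite by blast
  ultimately have "|(UNIV :: 'i set) \<times> (UNIV :: nat set)| \<le>o |UNIV :: 'i set|"
    using ordLeq_ordIso_trans by blast
  then have "\<exists>\<sigma> :: 'i \<times> nat \<Rightarrow> 'i. inj_on \<sigma> (UNIV \<times> UNIV) \<and> \<sigma> ` (UNIV \<times> UNIV) \<subseteq> UNIV"
    by (simp only: card_of_ordLeq[symmetric])
  then obtain \<sigma> :: "'i \<times> nat \<Rightarrow> 'i" where inj\<sigma>: "inj \<sigma>" by auto
  define \<Phi> where "\<Phi> f = \<sigma> ` {(i,n). n \<in> \<rho> (f i)}" for f :: "'i \<Rightarrow> real"
  have "inj \<Phi>"
  proof
    fix f f' :: "'i \<Rightarrow> real" assume "\<Phi> f = \<Phi> f'"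
    then have "{(i,n). n \<in> \<rho> (f i)} = {(i,n). n \<in> \<rho> (f' i)}"
      unfolding \<Phi>_def using inj\<sigma> by (simp add: inj_image_eq_iff)
    then have "\<rho> (f i) = \<rho> (f' i)" for i by (auto simp: set_eq_iff)
    then have "f i = f' i" for i using inj\<rho> by (simp add: inj_eq)
    then show "f = f'" by auto
  qed
  then show ?thesis using card_of_ordLeq[of "UNIV :: ('i \<Rightarrow> real) set" "UNIV :: 'i set set"] by blast
qed

context pieces_setup
begin

definition xa where "xa a = (SOME x. x \<in> P a)"
definition ia where "ia a = (SOME i. xa a \<in> D i)"

lemma xa: "xa a \<in> P a" unfolding xa_def using P_ne by (simp add: some_in_eq)

lemma ia: "xa a \<in> D (ia a)"
proof -
  have "xa a \<in> X" using xa X_def by auto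
  then have "\<exists>i. xa a \<in> D i" using in_D2 by blast
  then show ?thesis unfolding ia_def by (rule someI_ex)
qed

lemma card_Good: "|Good| \<le>o |Pow (UNIV :: 'i set)|"
proof -
  define code where "code F = (\<lambda>a. F (ia a) (xa a))" for F :: "'i \<Rightarrow> real \<Rightarrow> real"
  have "inj_on code Good"
  proof
    fix F F' assume F: "F \<in> Good" and F': "F' \<in> Good" and eq: "code F = code F'"
    obtain h where h: "F = Seq h" "goodh h" using F unfolding Good_def by blast
    obtain h' where h': "F' = Seq h'" "goodh h'" using F' unfolding Good_def by blast
    have "h (xa a) = h' (xa a)" for a
    proof -
      have "code F a = code F' a" using eq by simp
      then show ?thesis unfolding code_def h h' Seq_def using ia by simp
    qed
    have hh: "h x = h' x" for x
    proof (cases "x \<in> X")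
      case True
      then obtain a where a: "x \<in> P a" unfolding X_def by blast
      have "h x = h (xa a)" using h(2) a xa unfolding goodh_def by blast
      also have "\<dots> = h' (xa a)" by fact
      also have "\<dots> = h' x" using h'(2) a xa unfolding goodh_def by blast
      finally show ?thesis .
    next
      case False
      then show ?thesis using h(2) h'(2) unfolding goodh_def by simp
    qed
    have "h = h'" using hh by (rule ext)
    then show "F = F'" using h h' by simp
  qed
  then have "|Good| \<le>o |UNIV :: ('i \<Rightarrow> real) set|"
    using card_of_ordLeq[of Good "UNIV :: ('i \<Rightarrow> real) set"] by blast
  also have "|UNIV :: ('i \<Rightarrow> real) set| \<le>o |UNIV :: 'i set set|"
    by (rule fun_real_lepoll_Pow[OF inf])
  finally show ?thesis by simp
qed

lemma result: "algebrable (Pow (UNIV :: 'i set)) (AN r)"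
proof -
  let ?G = "range g" let ?B = "alg_gen (range g)"
  have GB: "?G \<subseteq> ?B" by (rule alg_gen_sup)
  have BGood: "?B \<subseteq> Good" by (rule alg_gen_least[OF subalg_Good]) (use g_Good in blast)
  have AN: "?B - {\<lambda>i x. 0} \<subseteq> AN r" using BGood Good_AN by blast
  obtain H where H: "?G \<subseteq> H" "H \<subseteq> ?B" "lin_indep H" "lin_span H = ?B"
    using basis_extend[OF subalg_alg_gen GB lin_indep_G] by blast
  have c1: "|Pow (UNIV :: 'i set)| \<le>o |H|"
    using ordIso_ordLeq_trans[OF ordIso_symmetric[OF card_G] card_of_mono1[OF H(1)]] .
  have "|H| \<le>o |Good|" using card_of_mono1 H(2) BGood by (meson order_trans)
  then have c2: "|H| \<le>o |Pow (UNIV :: 'i set)|" using card_Good ordLeq_transitive by blast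
  have "ordIso2 |H| |Pow (UNIV :: 'i set)|" using c1 c2 ordIso_iff_ordLeq by blast
  then have vd: "vdim_eq ?B (Pow (UNIV :: 'i set))" unfolding vdim_eq_def using H by blast
  show ?thesis unfolding algebrable_def
    using subalg_alg_gen AN vd minimal card_G by blast
qed

end

lemma small_null_R:
  fixes K :: "'k set" and S :: "real set"
  assumes h: "\<And>A::real set. A \<subseteq> {0..1} \<Longrightarrow> |A| <o |K| \<Longrightarrow> A \<in> null_sets lebesgue"
    and S: "|S| <o |K|"
  shows "S \<in> null_sets lebesgue"
proof -
  define Sn where "Sn n = S \<inter> {real_of_int n..real_of_int n + 1}" for n :: int
  have "negligible (Sn n)" for n
  proof -
    define T where "T = (\<lambda>x. x - real_of_int n) ` Sn n"
    have "T \<subseteq> {0..1}" unfolding T_def Sn_def by auto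
    moreover have "|T| <o |K|"
    proof -
      have "|T| \<le>o |Sn n|" unfolding T_def by (rule card_of_image)
      moreover have "|Sn n| \<le>o |S|" unfolding Sn_def by (rule card_of_mono1) blast
      ultimately show ?thesis using S ordLeq_ordLess_trans ordLeq_transitive by blast
    qed
    ultimately have "negligible T" using h negligible_iff_null_sets by blast
    then have "negligible ((+) (real_of_int n) ` T)" by (rule negligible_translation)
    moreover have "(+) (real_of_int n) ` T = Sn n" unfolding T_def by (auto simp: image_image)
    ultimately show ?thesis by simp
  qed
  then have "negligible (\<Union>(range Sn))" by (intro negligible_countable_Union) auto
  moreover have "S \<subseteq> \<Union>(range Sn)"
  proof
    fix x assume "x \<in> S"
    then have "x \<in> Sn \<lfloor>x\<rfloor>" unfolding Sn_def by (auto simp: of_int_floor_le)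
    then show "x \<in> \<Union>(range Sn)" by blast
  qed
  ultimately have "negligible S" using negligible_subset by blast
  then show ?thesis using negligible_iff_null_sets by blast
qed

lemma inner_closed_nonnull:
  fixes E :: "real set"
  assumes E: "E \<in> sets lebesgue" "E \<notin> null_sets lebesgue"
  shows "\<exists>F. closed F \<and> bounded F \<and> F \<subseteq> E \<and> F \<notin> null_sets lebesgue"
proof -
  have "\<exists>n::nat. \<not> negligible (E \<inter> cball 0 (real n))"
  proof (rule ccontr)
    assume "\<not> ?thesis"
    then have "negligible (\<Union>n. E \<inter> cball 0 (real n))" by (intro negligible_Union_nat) auto
    moreover have "E \<subseteq> (\<Union>n. E \<inter> cball 0 (real n))"
    proof
      fix x assume "x \<in> E"
      obtain n :: nat where "norm x \<le> real n" using real_arch_simple by blast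
      then show "x \<in> (\<Union>n. E \<inter> cball 0 (real n))" using \<open>x \<in> E\<close> by auto
    qed
    ultimately have "negligible E" using negligible_subset by blast
    then show False using E negligible_iff_null_sets by blast
  qed
  then obtain n :: nat where n: "\<not> negligible (E \<inter> cball 0 (real n))" by blast
  define E' where "E' = E \<inter> cball (0::real) (real n)"
  have bE: "bounded E'" unfolding E'_def by (simp add: bounded_Int)
  have sE: "E' \<in> sets lebesgue" unfolding E'_def by (meson E(1) fmeasurableD lmeasurable_cball sets.Int)
  have E'm: "E' \<in> lmeasurable" by (rule bounded_set_imp_lmeasurable[OF bE sE])
  have ne0: "measure lebesgue E' \<noteq> 0" using n negligible_iff_measure0[OF E'm] unfolding E'_def by blast
  have pos: "measure lebesgue E' > 0" using ne0 measure_nonneg[of lebesgue E'] by linarith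
  have half: "measure lebesgue E' / 2 > 0" using pos by simp
  obtain T where T: "closed T" "T \<subseteq> E'" "E' - T \<in> lmeasurable"
      "emeasure lebesgue (E' - T) < ennreal (measure lebesgue E' / 2)"
    by (rule sets_lebesgue_inner_closed[OF sE half])
  have "T \<notin> null_sets lebesgue"
  proof
    assume Tn: "T \<in> null_sets lebesgue"
    have "measure lebesgue (E' - T) = measure lebesgue E'"
      using measure_Diff_null_set[OF _ Tn] E'm by blast
    then have "emeasure lebesgue (E' - T) = ennreal (measure lebesgue E')"
      using emeasure_eq_measure2[OF T(3)] by simp
    then show False using T(4) pos by (simp add: ennreal_less_iff)
  qed
  moreover have "bounded T" using T(2) bE bounded_subset by blast
  ultimately show ?thesis using T E'_def by blast
qed

lemma meas_Icc: "x \<le> y \<Longrightarrow> measure lebesgue {x..y::real} = y - x"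
  by (subst measure_completion) auto

lemma closed_pos_card:
  fixes F :: "real set"
  assumes cl: "closed F" and bd: "bounded F" and nn: "F \<notin> null_sets lebesgue"
  shows "|UNIV :: real set| \<le>o |F|"
proof -
  obtain R where R: "\<And>z. z \<in> F \<Longrightarrow> \<bar>z\<bar> \<le> R" using bd unfolding bounded_iff by auto
  define a where "a = - R - 1"
  define b where "b = R"
  have Fab: "F \<subseteq> {a<..b}"
  proof
    fix z assume "z \<in> F"
    then have "\<bar>z\<bar> \<le> R" by (rule R)
    then show "z \<in> {a<..b}" unfolding a_def b_def by auto
  qed
  define Phi where "Phi x = measure lebesgue (F \<inter> {..x})" for x
  have cmp: "compact (F \<inter> {..x})" for x
  unfolding compact_eq_bounded_closed
  proof
    show "bounded (F \<inter> {..x})" using bd by (rule bounded_subset) blast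
    show "closed (F \<inter> {..x})" using cl by (intro closed_Int) auto
  qed
  have lm: "F \<inter> {..x} \<in> lmeasurable" for x using lmeasurable_compact[OF cmp] .
  have step: "Phi y = Phi x + measure lebesgue (F \<inter> {..y} - F \<inter> {..x})" if "x \<le> y" for x y
  proof -
    have "measure lebesgue (F \<inter> {..x} \<union> F \<inter> {..y}) = Phi x + measure lebesgue (F \<inter> {..y} - F \<inter> {..x})"
      unfolding Phi_def by (rule measure_Un2[OF lm lm])
    moreover have "F \<inter> {..x} \<union> F \<inter> {..y} = F \<inter> {..y}" using that by auto
    ultimately show ?thesis unfolding Phi_def by simp
  qed
  have diffle: "measure lebesgue (F \<inter> {..y} - F \<inter> {..x}) \<le> y - x" if "x \<le> y" for x y
  proof -
    have "F \<inter> {..y} - F \<inter> {..x} \<subseteq> {x..y}" by auto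
    moreover have "F \<inter> {..y} - F \<inter> {..x} \<in> sets lebesgue"
      using fmeasurable_Diff[OF lm fmeasurableD[OF lm]] by (rule fmeasurableD)
    ultimately have "measure lebesgue (F \<inter> {..y} - F \<inter> {..x}) \<le> measure lebesgue {x..y}"
      by (intro measure_mono_fmeasurable) auto
    then show ?thesis using meas_Icc[OF that] by simp
  qed
  have mono: "Phi x \<le> Phi y" if "x \<le> y" for x y
    using step[OF that] measure_nonneg[of lebesgue "F \<inter> {..y} - F \<inter> {..x}"] by linarith
  have lip: "\<bar>Phi x - Phi y\<bar> \<le> \<bar>x - y\<bar>" for x y
  proof (cases "x \<le> y")
    case True
    then show ?thesis using step[OF True] diffle[OF True] mono[OF True] by linarith
  next
    case False
    then have "y \<le> x" by simp
    then show ?thesis using step[OF \<open>y \<le> x\<close>] diffle[OF \<open>y \<le> x\<close>] mono[OF \<open>y \<le> x\<close>] by linarith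
  qed
  have cont: "continuous_on UNIV Phi"
  proof (rule lipschitz_on_continuous_on)
    show "1-lipschitz_on UNIV Phi"
      by (rule lipschitz_onI) (use lip in \<open>auto simp: dist_real_def\<close>)
  qed
  have Pa: "Phi a = 0"
  proof -
    have "F \<inter> {..a} = {}" using Fab by auto
    then show ?thesis unfolding Phi_def by simp
  qed
  define m where "m = measure lebesgue F"
  have Fb: "F \<inter> {..b} = F" using Fab by auto
  have Pb: "Phi b = m" unfolding Phi_def m_def using Fb by simp
  have Flm: "F \<in> lmeasurable" using lm[of b] unfolding Fb .
  have mpos: "m > 0"
  proof -
    have "\<not> negligible F" using nn negligible_iff_null_sets by blast
    then have "m \<noteq> 0" using negligible_iff_measure0[OF Flm] m_def by simp
    then show ?thesis using measure_nonneg[of lebesgue F] m_def by linarith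
  qed
  have "F \<noteq> {}" using nn by auto
  then obtain z where "z \<in> F" by blast
  then have "\<bar>z\<bar> \<le> R" by (rule R)
  then have ab: "a \<le> b" unfolding a_def b_def by simp
  define S where "S y = {x. a \<le> x \<and> x \<le> b \<and> Phi x = y}" for y
  define xs where "xs y = Inf (S y)" for y
  have xsS: "xs y \<in> S y" and xsF: "xs y \<in> F" if y: "y \<in> {0<..<m}" for y
  proof -
    have ne: "S y \<noteq> {}"
    proof -
      have "\<exists>x. a \<le> x \<and> x \<le> b \<and> Phi x = y"
        by (rule IVT') (use y Pa Pb ab continuous_on_subset[OF cont] in auto)
      then show ?thesis unfolding S_def by blast
    qed
    have bb: "bdd_below (S y)" unfolding S_def by (rule bdd_belowI[of _ a]) auto
    have cS: "closed (S y)"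
    proof -
      have "S y = {a..b} \<inter> {x. Phi x = (\<lambda>_. y) x}" unfolding S_def by auto
      moreover have "closed {x. Phi x = (\<lambda>_. y) x}" by (rule closed_Collect_eq[OF cont continuous_on_const])
      ultimately show ?thesis by auto
    qed
    show xs: "xs y \<in> S y" unfolding xs_def using closed_contains_Inf[OF ne bb cS] .
    show "xs y \<in> F"
    proof (rule ccontr)
      assume nF: "xs y \<notin> F"
      let ?x0 = "xs y"
      have x0: "a \<le> ?x0" "?x0 \<le> b" "Phi ?x0 = y" using xs unfolding S_def by auto
      have "?x0 \<noteq> a" using x0(3) Pa y by auto
      then have ax0: "a < ?x0" using x0 by simp
      have "open (- F)" using cl by auto
      then obtain d where d: "d > 0" "\<And>z. dist z ?x0 < d \<Longrightarrow> z \<in> - F"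
        using nF unfolding open_dist by blast
      define x1 where "x1 = max a (?x0 - d / 2)"
      have x1: "a \<le> x1" "x1 < ?x0" unfolding x1_def using ax0 d by auto
      have E0: "F \<inter> {..?x0} - F \<inter> {..x1} = {}"
      proof -
        have "z \<notin> F" if "x1 < z" "z \<le> ?x0" for z
          using d(2)[of z] that unfolding x1_def by (auto simp: dist_real_def)
        then show ?thesis by (auto simp: not_le[symmetric])
      qed
      have "Phi ?x0 = Phi x1 + measure lebesgue (F \<inter> {..?x0} - F \<inter> {..x1})"
        using step[OF less_imp_le[OF x1(2)]] .
      then have "Phi ?x0 = Phi x1" unfolding E0 by simp
      then have "x1 \<in> S y" unfolding S_def using x1 x0 by auto
      then have "xs y \<le> x1" unfolding xs_def by (rule cInf_lower[OF _ bb])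
      then show False using x1 by simp
    qed
  qed
  have "inj_on xs {0<..<m}"
  proof
    fix y y' assume "y \<in> {0<..<m}" "y' \<in> {0<..<m}" "xs y = xs y'"
    then show "y = y'" using xsS unfolding S_def by (metis (mono_tags, lifting) mem_Collect_eq)
  qed
  then have "|{0<..<m}| \<le>o |F|"
    using xsF card_of_ordLeq[of "{0<..<m}" F] by blast
  moreover have "ordIso2 |UNIV :: real set| |{0<..<m}|"
    using open_interval_eqpoll_reals[of 0 m] mpos eqpoll_sym eqpoll_iff_card_of_ordIso by blast
  ultimately show ?thesis using ordIso_ordLeq_trans by blast
qed

locale nonN =
  fixes r :: "('i \<times> 'i) set"
  assumes co: "card_order r"
    and hc: "has_card_nonN (UNIV :: 'i set)"
begin

lemma Fr: "Field r = UNIV"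
  using co card_order_on_well_order_on well_order_on_Field by metis

lemma Cr: "Card_order r"
  using co card_order_on_Card_order Fr by metis

lemma wo: "Well_order r"
  using Cr card_order_on_def by blast

lemma r_iso: "ordIso2 r |UNIV :: 'i set|"
  using card_of_Field_ordIso[OF Cr] Fr ordIso_symmetric by metis

lemma underS_small: "|underS r a| <o |UNIV :: 'i set|"
  using card_of_underS[OF Cr] Fr r_iso ordLess_ordIso_trans by blast

lemma r_refl: "(a,a) \<in> r"
  using wo Fr unfolding order_on_defs refl_on_def by auto

lemma r_total: "(a,b) \<in> r \<or> (b,a) \<in> r"
  using wo Fr r_refl unfolding order_on_defs total_on_def by (cases "a = b") auto

lemma wfR: "wf (r - Id)"
  using wo wo_rel.WF wo_rel_def by blast

lemma small01: "\<And>A::real set. A \<subseteq> {0..1} \<Longrightarrow> |A| <o |UNIV :: 'i set| \<Longrightarrow> A \<in> null_sets lebesgue"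
  using hc unfolding has_card_nonN_def by blast

lemma A0ex: "\<exists>A. A \<subseteq> {0..1::real} \<and> A \<notin> null_sets lebesgue \<and> ordIso2 (card_of A) (card_of (UNIV :: 'i set))"
  using hc unfolding has_card_nonN_def by blast

definition A0 where "A0 = (SOME A. A \<subseteq> {0..1::real} \<and> A \<notin> null_sets lebesgue \<and> ordIso2 (card_of A) (card_of (UNIV :: 'i set)))"

lemma A0: "A0 \<subseteq> {0..1}" "A0 \<notin> null_sets lebesgue" "ordIso2 |A0| |UNIV :: 'i set|"
  using someI_ex[OF A0ex] unfolding A0_def by blast+

lemma small_null: "\<And>S::real set. |S| <o |UNIV::'i set| \<Longrightarrow> S \<in> null_sets lebesgue"
  by (rule small_null_R[of "UNIV :: 'i set", OF small01])

lemma nonnull_big: fixes S :: "real set" assumes "S \<notin> null_sets lebesgue" shows "|UNIV :: 'i set| \<le>o |S|"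
proof (rule ccontr)
  assume "\<not> |UNIV :: 'i set| \<le>o |S|"
  then have "|S| <o |UNIV :: 'i set|"
    by (simp add: not_ordLeq_iff_ordLess[OF card_of_Well_order card_of_Well_order])
  then show False using small_null assms by blast
qed

lemma inf: "infinite (UNIV :: 'i set)"
proof
  assume f: "finite (UNIV :: 'i set)"
  then have "finite A0" using card_of_ordIso_finite[OF A0(3)] by simp
  then have "negligible A0" by (rule negligible_finite)
  then show False using A0(2) negligible_iff_null_sets by blast
qed

lemma kappa_le_c: "|UNIV :: 'i set| \<le>o |UNIV :: real set|"
  using ordIso_ordLeq_trans[OF ordIso_symmetric[OF A0(3)] card_of_mono1[of A0 UNIV]] by simp

end

context nonN
begin

lemma caseA_pieces:
  assumes lt: "|UNIV :: 'i set| <o |UNIV :: real set|"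
  shows "\<exists>P :: 'i \<Rightarrow> real set. (\<forall>a b. a \<noteq> b \<longrightarrow> P a \<inter> P b = {}) \<and> |\<Union>(range P)| \<le>o |UNIV::'i set|
            \<and> (\<forall>S. S \<noteq> {} \<longrightarrow> (\<Union>a\<in>S. P a) \<notin> sets lebesgue)"
proof -
  have infA: "infinite A0" using card_of_ordIso_finite[OF A0(3)] inf by simp
  define E where "E = (\<lambda>(x,y). x - y) ` (A0 \<times> A0)"
  have cE: "|E| \<le>o |UNIV :: 'i set|"
  proof -
    have "|E| \<le>o |A0 \<times> A0|" unfolding E_def by (rule card_of_image)
    moreover have "ordIso2 |A0 \<times> A0| |A0|" using card_of_Times_same_infinite[OF infA] .
    ultimately have "|E| \<le>o |A0|" using ordLeq_ordIso_trans by blast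
    then show ?thesis using ordLeq_ordIso_trans A0(3) by blast
  qed
  have trE: "|(+) c ` E| \<le>o |UNIV :: 'i set|" for c using card_of_image ordLeq_transitive cE by blast
  define Q where "Q a g t \<longleftrightarrow> (\<forall>b. (b,a) \<in> r - Id \<longrightarrow> t - g b \<notin> E)" for a and g :: "'i \<Rightarrow> real" and t
  have "\<exists>f. \<forall>a. Q a f (f a)"
  proof (rule wf_choice[OF wfR])
    fix a and g :: "'i \<Rightarrow> real"
    define Fb where "Fb = (\<Union>b\<in>underS r a. (+) (g b) ` E)"
    have "|Fb| \<le>o |UNIV :: 'i set|" unfolding Fb_def
      by (rule card_of_UNION_ordLeq_infinite[OF inf]) (use underS_small ordLess_imp_ordLeq trE in auto)
    then have "|Fb| <o |UNIV :: real set|" using lt ordLeq_ordLess_trans by blast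
    then have "Fb \<noteq> UNIV" using ordLess_irreflexive by force
    then obtain t where t: "t \<notin> Fb" by blast
    have "Q a g t" unfolding Q_def
    proof (intro allI impI)
      fix b assume "(b,a) \<in> r - Id"
      then have "b \<in> underS r a" by (auto simp: underS_def)
      then show "t - g b \<notin> E" using t unfolding Fb_def by force
    qed
    then show "\<exists>t. Q a g t" by blast
  next
    fix a g g' t assume "\<And>b. (b, a) \<in> r - Id \<Longrightarrow> g b = g' b" "Q a g t"
    then show "Q a g' t" unfolding Q_def by simp
  qed
  then obtain tr where tr: "\<And>a b. (b,a) \<in> r - Id \<Longrightarrow> tr a - tr b \<notin> E" unfolding Q_def by blast
  define P where "P a = (+) (tr a) ` A0" for a
  have disj: "P a \<inter> P b = {}" if "a \<noteq> b" for a b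
  proof (rule ccontr)
    assume "P a \<inter> P b \<noteq> {}"
    then obtain x y where xy: "x \<in> A0" "y \<in> A0" "tr a + x = tr b + y" unfolding P_def by auto
    have "(b,a) \<in> r - Id \<or> (a,b) \<in> r - Id" using r_total that by auto
    then show False
    proof
      assume "(b,a) \<in> r - Id"
      moreover have "tr a - tr b = y - x" using xy by simp
      moreover have "y - x \<in> E" unfolding E_def using xy by force
      ultimately show False using tr by metis
    next
      assume "(a,b) \<in> r - Id"
      moreover have "tr b - tr a = x - y" using xy by simp
      moreover have "x - y \<in> E" unfolding E_def using xy by force
      ultimately show False using tr by metis
    qed
  qed
  have cardP: "|P a| \<le>o |UNIV :: 'i set|" for a
    unfolding P_def using card_of_image ordLeq_ordIso_trans A0(3) by blast
  have cX: "|\<Union>(range P)| \<le>o |UNIV::'i set|"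
    by (rule card_of_UNION_ordLeq_infinite[OF inf]) (auto intro: cardP ordIso_imp_ordLeq[OF card_of_refl])
  have Pnn: "\<not> negligible (P a)" for a
  proof
    assume "negligible (P a)"
    then have "negligible ((+) (- tr a) ` P a)" by (rule negligible_translation)
    moreover have "(+) (- tr a) ` P a = A0" unfolding P_def by (auto simp: image_image)
    ultimately show False using A0(2) negligible_iff_null_sets by auto
  qed
  have nm: "(\<Union>a\<in>S. P a) \<notin> sets lebesgue" if Sne: "S \<noteq> {}" for S
  proof
    assume U: "(\<Union>a\<in>S. P a) \<in> sets lebesgue"
    obtain a where "a \<in> S" using Sne by blast
    have "(\<Union>a\<in>S. P a) \<notin> null_sets lebesgue"
    proof
      assume "(\<Union>a\<in>S. P a) \<in> null_sets lebesgue"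
      then have "negligible (\<Union>a\<in>S. P a)" using negligible_iff_null_sets by blast
      then have "negligible (P a)" by (rule negligible_subset) (use \<open>a \<in> S\<close> in blast)
      then show False using Pnn by blast
    qed
    then obtain F where F: "closed F" "bounded F" "F \<subseteq> (\<Union>a\<in>S. P a)" "F \<notin> null_sets lebesgue"
      using inner_closed_nonnull[OF U] by blast
    have "|UNIV :: real set| \<le>o |F|" by (rule closed_pos_card[OF F(1,2,4)])
    moreover have "|F| \<le>o |\<Union>(range P)|" using F(3) by (intro card_of_mono1) blast
    ultimately have "|UNIV :: real set| \<le>o |UNIV :: 'i set|" using cX ordLeq_transitive by blast
    then show False using lt not_ordLess_ordLeq by blast
  qed
  show ?thesis using disj cX nm by blast
qed

end

definition ccode :: "real set \<Rightarrow> (rat \<times> rat) set" where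
  "ccode F = {(p,q). {of_rat p<..<of_rat q} \<inter> F = {}}"

lemma ccode_sep:
  assumes "closed F'" "x \<in> F" "x \<notin> F'"
  shows "\<exists>pq. pq \<in> ccode F' \<and> pq \<notin> ccode F"
proof -
  have "open (- F')" using assms(1) by auto
  then obtain d where d: "d > 0" "\<And>z. dist z x < d \<Longrightarrow> z \<in> - F'"
    using assms(3) unfolding open_dist by blast
  obtain p :: rat where p: "x - d < of_rat p" "of_rat p < x" using of_rat_dense[of "x - d" x] d by auto
  obtain q :: rat where q: "x < of_rat q" "of_rat q < x + d" using of_rat_dense[of x "x + d"] d by auto
  have "{of_rat p<..<of_rat q} \<inter> F' = {}"
  proof -
    have "z \<notin> F'" if "of_rat p < z" "z < of_rat q" for z
      using d(2)[of z] that p q by (auto simp: dist_real_def)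
    then show ?thesis by auto
  qed
  moreover have "x \<in> {of_rat p<..<of_rat q} \<inter> F" using p q assms(2) by auto
  ultimately show ?thesis unfolding ccode_def by blast
qed

lemma ccode_inj: "inj_on ccode {F. closed F}"
proof
  fix F F' assume F: "F \<in> {F. closed F}" and F': "F' \<in> {F. closed F}" and eq: "ccode F = ccode F'"
  show "F = F'"
  proof (rule ccontr)
    assume "F \<noteq> F'"
    then obtain x where "x \<in> F \<and> x \<notin> F' \<or> x \<in> F' \<and> x \<notin> F" by blast
    then show False
    proof
      assume "x \<in> F \<and> x \<notin> F'"
      then show False using ccode_sep[of F' x F] F' eq by auto
    next
      assume "x \<in> F' \<and> x \<notin> F"
      then show False using ccode_sep[of F x F'] F eq by auto
    qed
  qed
qed

lemma closed_sets_card: "|{F :: real set. closed F}| \<le>o |UNIV :: real set|"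
proof -
  obtain \<rho> :: "nat set \<Rightarrow> real" where "bij_betw \<rho> UNIV UNIV"
    using nat_sets_eqpoll_reals unfolding eqpoll_def by blast
  then have inj\<rho>: "inj \<rho>" by (simp add: bij_betw_def)
  have injn: "inj (to_nat :: rat \<times> rat \<Rightarrow> nat)" by simp
  define c where "c F = \<rho> (to_nat ` ccode F)" for F
  have "inj_on c {F. closed F}"
  proof
    fix F F' assume "F \<in> {F. closed F}" "F' \<in> {F. closed F}" "c F = c F'"
    then have "to_nat ` ccode F = to_nat ` ccode F'" unfolding c_def using inj\<rho> by (simp add: inj_eq)
    then have "ccode F = ccode F'" using inj_image_eq_iff[OF injn] by blast
    then show "F = F'" using ccode_inj \<open>F \<in> _\<close> \<open>F' \<in> _\<close> by (simp add: inj_on_def)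
  qed
  then show ?thesis using card_of_ordLeq[of "{F :: real set. closed F}" "UNIV :: real set"] by blast
qed

lemma option_card:
  assumes "infinite (UNIV :: 'i set)"
  shows "|UNIV :: 'i option set| \<le>o |UNIV :: 'i set|"
proof -
  have "(UNIV :: 'i option set) = insert None (range Some)" by (auto intro: option.exhaust)
  moreover have "infinite (range (Some :: 'i \<Rightarrow> 'i option))" using assms finite_imageD inj_Some by blast
  ultimately have "(UNIV :: 'i option set) \<approx> range (Some :: 'i \<Rightarrow> 'i option)"
    using infinite_insert_eqpoll by metis
  moreover have "range (Some :: 'i \<Rightarrow> 'i option) \<approx> (UNIV :: 'i set)"
    using inj_on_image_eqpoll_self[of Some UNIV] by simp
  ultimately have "(UNIV :: 'i option set) \<approx> (UNIV :: 'i set)" using eqpoll_trans by blast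
  then show ?thesis using eqpoll_iff_card_of_ordIso ordIso_imp_ordLeq by blast
qed

context nonN
begin

lemma caseB_pieces:
  assumes ge: "|UNIV :: real set| \<le>o |UNIV :: 'i set|"
  shows "\<exists>P :: 'i \<Rightarrow> real set. (\<forall>a b. a \<noteq> b \<longrightarrow> P a \<inter> P b = {}) \<and> |\<Union>(range P)| \<le>o |UNIV::'i set|
            \<and> (\<forall>S. S \<noteq> {} \<longrightarrow> (\<Union>a\<in>S. P a) \<notin> sets lebesgue)"
proof -
  define FF where "FF = {F :: real set. closed F \<and> F \<notin> null_sets lebesgue}"
  define J where "J = FF \<times> (UNIV :: 'i option set)"
  have cFF: "|FF| \<le>o |UNIV :: 'i set|"
  proof -
    have "|FF| \<le>o |{F :: real set. closed F}|" unfolding FF_def by (rule card_of_mono1) blast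
    then show ?thesis using ordLeq_transitive[OF ordLeq_transitive[OF _ closed_sets_card] ge] by blast
  qed
  have "|J| \<le>o |(UNIV :: 'i set) \<times> (UNIV :: 'i set)|"
  proof -
    have "|J| \<le>o |(UNIV :: 'i set) \<times> (UNIV :: 'i option set)|" unfolding J_def by (rule card_of_Times_mono1[OF cFF])
    moreover have "|(UNIV :: 'i set) \<times> (UNIV :: 'i option set)| \<le>o |(UNIV :: 'i set) \<times> (UNIV :: 'i set)|"
      by (rule card_of_Times_mono2[OF option_card[OF inf]])
    ultimately show ?thesis using ordLeq_transitive by blast
  qed
  then have "|J| \<le>o |UNIV :: 'i set|" using ordLeq_ordIso_trans[OF _ card_of_Times_same_infinite[OF inf]] by blast
  then have "\<exists>\<phi> :: real set \<times> 'i option \<Rightarrow> 'i. inj_on \<phi> J \<and> \<phi> ` J \<subseteq> UNIV" by (simp only: card_of_ordLeq[symmetric])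
  then obtain \<phi> :: "real set \<times> 'i option \<Rightarrow> 'i" where inj\<phi>: "inj_on \<phi> J" by blast
  define R where "R = inv_image (r - Id) \<phi>"
  have wfR': "wf R" unfolding R_def using wfR by simp
  define Q where "Q j f t \<longleftrightarrow> (j \<in> J \<longrightarrow> t \<in> fst j \<and> (\<forall>k\<in>J. (k,j) \<in> R \<longrightarrow> t \<noteq> f k))"
    for j and f :: "real set \<times> 'i option \<Rightarrow> real" and t
  have "\<exists>f. \<forall>j. Q j f (f j)"
  proof (rule wf_choice[OF wfR'])
    fix j and f :: "real set \<times> 'i option \<Rightarrow> real"
    show "\<exists>t. Q j f t"
    proof (cases "j \<in> J")
      case False then show ?thesis unfolding Q_def by blast
    next
      case True
      define K where "K = {k \<in> J. (k,j) \<in> R}"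
      have "\<phi> ` K \<subseteq> underS r (\<phi> j)" unfolding K_def R_def underS_def by auto
      moreover have "inj_on \<phi> K" using inj\<phi> unfolding K_def by (rule inj_on_subset) blast
      ultimately have "|K| \<le>o |underS r (\<phi> j)|"
        by (intro iffD1[OF card_of_ordLeq] exI[of _ \<phi>]) blast
      then have "|f ` K| \<le>o |underS r (\<phi> j)|" using card_of_image ordLeq_transitive by blast
      then have "|f ` K| <o |UNIV :: 'i set|" using ordLeq_ordLess_trans underS_small by blast
      moreover have "fst j \<notin> null_sets lebesgue" using True unfolding J_def FF_def by auto
      ultimately have lt: "|f ` K| <o |fst j|" using ordLess_ordLeq_trans[OF _ nonnull_big] by blast
      have "\<not> fst j \<subseteq> f ` K"
      proof
        assume "fst j \<subseteq> f ` K"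
        then have "|fst j| \<le>o |f ` K|" by (rule card_of_mono1)
        then show False using lt not_ordLess_ordLeq by blast
      qed
      then obtain t where "t \<in> fst j" "t \<notin> f ` K" by blast
      then have "Q j f t" unfolding Q_def K_def by blast
      then show ?thesis by blast
    qed
  next
    fix a g g' t assume "\<And>b. (b, a) \<in> R \<Longrightarrow> g b = g' b" "Q a g t"
    then show "Q a g' t" unfolding Q_def by simp
  qed
  then obtain f where f: "\<And>j. Q j f (f j)" by blast
  have fin: "f j \<in> fst j" if "j \<in> J" for j using f[of j] that unfolding Q_def by blast
  have finj: "f j \<noteq> f k" if "j \<in> J" "k \<in> J" "j \<noteq> k" for j k
  proof -
    have "\<phi> j \<noteq> \<phi> k" using inj\<phi> that by (meson inj_on_eq_iff)
    then have "(\<phi> k, \<phi> j) \<in> r - Id \<or> (\<phi> j, \<phi> k) \<in> r - Id" using r_total by auto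
    then show ?thesis
    proof
      assume "(\<phi> k, \<phi> j) \<in> r - Id"
      then have "(k,j) \<in> R" unfolding R_def by simp
      then show ?thesis using f[of j] that unfolding Q_def by blast
    next
      assume "(\<phi> j, \<phi> k) \<in> r - Id"
      then have "(j,k) \<in> R" unfolding R_def by simp
      then show ?thesis using f[of k] that unfolding Q_def by metis
    qed
  qed
  define P where "P a = (\<lambda>F. f (F, Some a)) ` FF" for a
  have disj: "P a \<inter> P b = {}" if "a \<noteq> b" for a b
  proof (rule ccontr)
    assume "P a \<inter> P b \<noteq> {}"
    then obtain F F' where "F \<in> FF" "F' \<in> FF" "f (F, Some a) = f (F', Some b)" unfolding P_def by auto
    moreover have "(F, Some a) \<in> J" "(F', Some b) \<in> J" using calculation unfolding J_def by auto
    ultimately show False using finj that by blast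
  qed
  have cX: "|\<Union>(range P)| \<le>o |UNIV::'i set|"
    using card_of_mono1[of "\<Union>(range P)" UNIV] ge ordLeq_transitive by blast
  have I01: "\<not> negligible {0..1::real}"
    using negligible_iff_measure0[of "{0..1::real}"] meas_Icc[of 0 1] by simp
  have nm: "(\<Union>a\<in>S. P a) \<notin> sets lebesgue" if Sne: "S \<noteq> {}" for S
  proof
    assume U: "(\<Union>a\<in>S. P a) \<in> sets lebesgue"
    obtain a where aS: "a \<in> S" using Sne by blast
    show False
    proof (cases "(\<Union>a\<in>S. P a) \<in> null_sets lebesgue")
      case False
      then obtain F where F: "closed F" "bounded F" "F \<subseteq> (\<Union>a\<in>S. P a)" "F \<notin> null_sets lebesgue"
        using inner_closed_nonnull[OF U] by blast
      then have FFF: "F \<in> FF" unfolding FF_def by blast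
      then have "(F, None) \<in> J" unfolding J_def by simp
      then have "f (F, None) \<in> F" using fin by fastforce
      then obtain b F' where "F' \<in> FF" "f (F, None) = f (F', Some b)" using F(3) unfolding P_def by blast
      moreover have "(F', Some b) \<in> J" using calculation unfolding J_def by simp
      ultimately show False using finj \<open>(F, None) \<in> J\<close> by blast
    next
      case True
      define V where "V = {0..1::real} - (\<Union>a\<in>S. P a)"
      have Vs: "V \<in> sets lebesgue" unfolding V_def using U by auto
      have "V \<notin> null_sets lebesgue"
      proof
        assume "V \<in> null_sets lebesgue"
        then have "negligible (V \<union> (\<Union>a\<in>S. P a))" using True negligible_iff_null_sets by blast
        moreover have "{0..1} \<subseteq> V \<union> (\<Union>a\<in>S. P a)" unfolding V_def by blast
        ultimately show False using I01 negligible_subset by blast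
      qed
      then obtain F where F: "closed F" "bounded F" "F \<subseteq> V" "F \<notin> null_sets lebesgue"
        using inner_closed_nonnull[OF Vs] by blast
      then have "F \<in> FF" unfolding FF_def by blast
      then have "(F, Some a) \<in> J" unfolding J_def by simp
      then have "f (F, Some a) \<in> F" using fin by fastforce
      moreover have "f (F, Some a) \<in> P a" unfolding P_def using \<open>F \<in> FF\<close> by blast
      ultimately show False using F(3) aS unfolding V_def by blast
    qed
  qed
  show ?thesis using disj cX nm by blast
qed

end

theorem mainTheorem16:
  fixes r :: "('i \<times> 'i) set"
  assumes "card_order r"
    and "has_card_nonN (UNIV :: 'i set)"
  shows "algebrable (Pow (UNIV :: 'i set)) (AN r)"
proof -
  interpret nonN r using assms by unfold_locales
  have "\<exists>P :: 'i \<Rightarrow> real set. (\<forall>a b. a \<noteq> b \<longrightarrow> P a \<inter> P b = {}) \<and> |\<Union>(range P)| \<le>o |UNIV::'i set|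
            \<and> (\<forall>S. S \<noteq> {} \<longrightarrow> (\<Union>a\<in>S. P a) \<notin> sets lebesgue)"
  proof (cases "|UNIV :: 'i set| <o |UNIV :: real set|")
    case True
    then show ?thesis by (rule caseA_pieces)
  next
    case False
    then have "|UNIV :: real set| \<le>o |UNIV :: 'i set|"
      by (simp add: not_ordLess_iff_ordLeq[OF card_of_Well_order card_of_Well_order])
    then show ?thesis by (rule caseB_pieces)
  qed
  then obtain P :: "'i \<Rightarrow> real set" where P: "\<And>a b. a \<noteq> b \<Longrightarrow> P a \<inter> P b = {}"
    "|\<Union>(range P)| \<le>o |UNIV::'i set|" "\<And>S. S \<noteq> {} \<Longrightarrow> (\<Union>a\<in>S. P a) \<notin> sets lebesgue"
    by blast
  interpret pieces_setup r P
    by unfold_locales (use co inf small_null P in auto)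
  show ?thesis by (rule result)
qed

end
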